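(* Let $G$ be the path graph on $n$ vertices $v_1,\dots,v_n$ ($v_t$ adjacent to $v_{t+1}$ for $1\le t<n$; the linear nearest-neighbor architecture). The QFT circuit on $n$ qubits produced by the construction in the context has CNOT cost $1.5n^2-1.5n-1$.
   Context: A walk is a sequence $(u_1,\dots,u_h)$ of vertices with consecutive entries adjacent (repetitions allowed), of length $h$. Each vertex carries one physical qubit; two-qubit gates only act on qubits at adjacent vertices. Gates: Hadamard $H$; controlled phase $CR_d=\mathrm{diag}(1,1,1,e^{i\pi/2^{d-1}})$; SWAP. Construction: let $P$ be a shortest walk in $G$ visiting all vertices. Place logical qubit $r$ ($1\le r\le n$) on the $r$-th distinct vertex of $P$ in order of first occurrence; whenever a SWAP is applied the logical qubits on its two vertices exchange places. Let $R=V$. For $r=1,\dots,n$: let $P'=(u_1,\dots,u_{k'})$ be $P$ if $r=1$, and otherwise a shortest walk in the induced subgraph $G[R]$ that starts at the vertex currently holding logical qubit $r$ and visits every vertex of $R$. Cascade $r$: apply $H$ to $u_1$; $j=1$, $U=\emptyset$; while $j\le k'-1$: (i) if $u_{j+1}\notin U$, apply $CR_d$ with control $u_{j+1}$, target $u_j$, where $d$ is (index of the logical qubit on $u_{j+1}$) $-\,r$, and add $u_{j+1}$ to $U$; (ii) if $j\le k'-2$ and $u_{j+2}=u_j$, set $j\leftarrow j+2$; otherwise, if $k'\ne 2$ apply SWAP to $u_j,u_{j+1}$, and set $j\leftarrow j+1$. After cascade $r$, remove from $R$ the vertex holding logical qubit $r$. CNOT cost: number of CNOTs after decomposition, counting $H$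 as 0, each $CR_d$ as 2, each SWAP as 3, and a $CR_d$ immediately followed by a SWAP on the same two qubits as 3 in total. *)

theory Defs
  imports Complex_Main
begin

text \<open>Physical qubits are identified with vertices (natural numbers).\<close>
datatype gate =
    Had nat
  | CR nat nat int          (* CR nat nat d: control vertex, target vertex, index d *)
  | SWAP nat nat

fun cnot_cost :: "gate list \<Rightarrow> nat" where
  "cnot_cost [] = 0"
| "cnot_cost (Had _ # gs) = cnot_cost gs"
| "cnot_cost (CR c t d # SWAP a b # gs) =
     (if {a, b} = {c, t} then 3 + cnot_cost gs else 2 + cnot_cost (SWAP a b # gs))"
| "cnot_cost (CR c t d # gs) = 2 + cnot_cost gs"
| "cnot_cost (SWAP a b # gs) = 3 + cnot_cost gs"

definition is_walk :: "(nat \<Rightarrow> nat \<Rightarrow> bool) \<Rightarrow> nat set \<Rightarrow> nat list \<Rightarrow> bool" where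
  "is_walk E R ws \<longleftrightarrow> ws \<noteq> [] \<and> set ws \<subseteq> R \<and>
     (\<forall>i. Suc i < length ws \<longrightarrow> E (ws ! i) (ws ! Suc i))"

definition shortest_cover_walk :: "(nat \<Rightarrow> nat \<Rightarrow> bool) \<Rightarrow> nat set \<Rightarrow> nat list \<Rightarrow> bool" where
  "shortest_cover_walk E R ws \<longleftrightarrow> is_walk E R ws \<and> set ws = R \<and>
     (\<forall>ws'. is_walk E R ws' \<and> set ws' = R \<longrightarrow> length ws \<le> length ws')"

definition shortest_cover_walk_from ::
  "(nat \<Rightarrow> nat \<Rightarrow> bool) \<Rightarrow> nat set \<Rightarrow> nat \<Rightarrow> nat list \<Rightarrow> bool" where
  "shortest_cover_walk_from E R s ws \<longleftrightarrow> is_walk E R ws \<and> set ws = R \<and> hd ws = s \<and>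
     (\<forall>ws'. is_walk E R ws' \<and> set ws' = R \<and> hd ws' = s \<longrightarrow> length ws \<le> length ws')"

text \<open>A placement maps each vertex to the index of the logical qubit it currently holds.\<close>
type_synonym placement = "nat \<Rightarrow> nat"

definition swap_pl :: "placement \<Rightarrow> nat \<Rightarrow> nat \<Rightarrow> placement" where
  "swap_pl pl a b = pl(a := pl b, b := pl a)"

text \<open>The argument list is the remaining walk
  (u_j, u_{j+1}, ..., u_{k'}); k2 says whether k' = 2; U is the set of used vertices.\<close>
fun cascade_loop :: "nat \<Rightarrow> bool \<Rightarrow> nat set \<Rightarrow> placement \<Rightarrow> nat list \<Rightarrow> gate list \<times> placement" where
  "cascade_loop r k2 U pl (a # b # rest) =
     (let g1 = (if b \<notin> U then [CR b a (int (pl b) - int r)] else []);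
          U' = insert b U
      in if rest \<noteq> [] \<and> hd rest = a
         then (let (g, pl') = cascade_loop r k2 U' pl rest in (g1 @ g, pl'))
         else if \<not> k2
         then (let (g, pl') = cascade_loop r k2 U' (swap_pl pl a b) (b # rest)
               in (g1 @ [SWAP a b] @ g, pl'))
         else (let (g, pl') = cascade_loop r k2 U' pl (b # rest) in (g1 @ g, pl')))"
| "cascade_loop r k2 U pl ws = ([], pl)"

definition cascade :: "nat \<Rightarrow> nat list \<Rightarrow> placement \<Rightarrow> gate list \<times> placement" where
  "cascade r ws pl =
     (let (g, pl') = cascade_loop r (length ws = 2) {} pl ws in (Had (hd ws) # g, pl'))"

text \<open>Initial placement: logical qubit r sits on the r-th distinct vertex of P
  (in order of first occurrence).\<close>
definition init_pl :: "nat list \<Rightarrow> placement" where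
  "init_pl P v = Suc (LEAST i. i < length (remdups P) \<and> remdups P ! i = v)"

definition holder :: "nat set \<Rightarrow> placement \<Rightarrow> nat \<Rightarrow> nat" where
  "holder V pl r = (THE v. v \<in> V \<and> pl v = r)"

text \<open>State after the first m cascades, given the walks W r used for cascade r:
  (emitted gates, placement, remaining vertex set R).\<close>
fun qft_state :: "nat set \<Rightarrow> nat list \<Rightarrow> (nat \<Rightarrow> nat list) \<Rightarrow> nat \<Rightarrow>
                  gate list \<times> placement \<times> nat set" where
  "qft_state V P W 0 = ([], init_pl P, V)"
| "qft_state V P W (Suc m) =
     (let (g, pl, R) = qft_state V P W m;
          (g', pl') = cascade (Suc m) (W (Suc m)) pl
      in (g @ g', pl', R - {holder V pl' (Suc m)}))"

definition valid_choices ::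
  "(nat \<Rightarrow> nat \<Rightarrow> bool) \<Rightarrow> nat set \<Rightarrow> nat \<Rightarrow> nat list \<Rightarrow> (nat \<Rightarrow> nat list) \<Rightarrow> bool" where
  "valid_choices E V n P W \<longleftrightarrow> shortest_cover_walk E V P \<and> W 1 = P \<and>
     (\<forall>r. 2 \<le> r \<and> r \<le> n \<longrightarrow>
        (let (g, pl, R) = qft_state V P W (r - 1)
         in shortest_cover_walk_from E R (holder V pl r) (W r)))"

definition qft_circuit :: "nat set \<Rightarrow> nat \<Rightarrow> nat list \<Rightarrow> (nat \<Rightarrow> nat list) \<Rightarrow> gate list" where
  "qft_circuit V n P W = fst (qft_state V P W n)"

definition path_adj :: "nat \<Rightarrow> nat \<Rightarrow> bool" where
  "path_adj u v \<longleftrightarrow> v = Suc u \<or> u = Suc v"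

end

theory Submission imports Defs begin

definition pw :: "nat list \<Rightarrow> bool" where
  "pw L \<longleftrightarrow> (\<forall>i. Suc i < length L \<longrightarrow> path_adj (L!i) (L!Suc i))"

lemma cost_app_Had: "cnot_cost (xs @ Had h # ys) = cnot_cost xs + cnot_cost ys"
  by (induction xs rule: cnot_cost.induct) auto

lemma pw_asc:
  assumes "pw L" "distinct L" "Suc 0 < length L" "L!1 = L!0 + 1"
  shows "\<forall>j<length L. L!j = L!0 + j"
proof -
  have "j < length L \<Longrightarrow> L!j = L!0 + j" for j
  proof (induction j rule: less_induct)
    case (less j)
    show ?case
    proof (cases j)
      case 0 then show ?thesis by simp
    next
      case (Suc i)
      show ?thesis
      proof (cases i)
        case 0 then show ?thesis using Suc assms(4) by simp
      next
        case (Suc k)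
        have j: "j = Suc (Suc k)" using Suc \<open>j = Suc i\<close> by simp
        have e1: "L!Suc k = L!0 + Suc k" using less.IH[of "Suc k"] less.prems j by simp
        have e2: "L!k = L!0 + k" using less.IH[of k] less.prems j by simp
        have d: "L!j \<noteq> L!k" using assms(2) less.prems j by (simp add: nth_eq_iff_index_eq)
        have "path_adj (L!Suc k) (L!j)" using assms(1) less.prems j unfolding pw_def by simp
        then have "L!j = Suc (L!Suc k) \<or> L!Suc k = Suc (L!j)" unfolding path_adj_def by simp
        then show ?thesis using e1 e2 d j by linarith
      qed
    qed
  qed
  then show ?thesis by blast
qed

lemma pw_desc:
  assumes "pw L" "distinct L" "Suc 0 < length L" "L!0 = L!1 + 1"
  shows "\<forall>j<length L. L!j + j = L!0"
proof -
  have "j < length L \<Longrightarrow> L!j + j = L!0" for j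
  proof (induction j rule: less_induct)
    case (less j)
    show ?case
    proof (cases j)
      case 0 then show ?thesis by simp
    next
      case (Suc i)
      show ?thesis
      proof (cases i)
        case 0 then show ?thesis using Suc assms(4) by simp
      next
        case (Suc k)
        have j: "j = Suc (Suc k)" using Suc \<open>j = Suc i\<close> by simp
        have e1: "L!Suc k + Suc k = L!0" using less.IH[of "Suc k"] less.prems j by simp
        have e2: "L!k + k = L!0" using less.IH[of k] less.prems j by simp
        have d: "L!j \<noteq> L!k" using assms(2) less.prems j by (simp add: nth_eq_iff_index_eq)
        have "path_adj (L!Suc k) (L!j)" using assms(1) less.prems j unfolding pw_def by simp
        then have "L!j = Suc (L!Suc k) \<or> L!Suc k = Suc (L!j)" unfolding path_adj_def by simp
        then show ?thesis using e1 e2 d j by linarith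
      qed
    qed
  qed
  then show ?thesis by blast
qed

lemma pw_dir:
  assumes "pw L" "distinct L" "Suc 0 < length L"
  shows "(\<forall>j<length L. L!j = L!0 + j) \<or> (\<forall>j<length L. L!j + j = L!0)"
proof -
  have "path_adj (L!0) (L!1)" using assms unfolding pw_def by (metis One_nat_def)
  then have "L!1 = L!0 + 1 \<or> L!0 = L!1 + 1" unfolding path_adj_def by simp
  then show ?thesis
  proof
    assume "L!1 = L!0 + 1"
    then show ?thesis using pw_asc[OF assms] by blast
  next
    assume "L!0 = L!1 + 1"
    then show ?thesis using pw_desc[OF assms] by blast
  qed
qed

lemma pw_unique:
  assumes "pw A" "pw B" "distinct A" "distinct B" "set A = set B" "A \<noteq> []" "hd A = hd B"
  shows "A = B"
proof -
  have len: "length A = length B" using distinct_card[OF assms(3)] distinct_card[OF assms(4)] assms(5) by simp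
  have B: "B \<noteq> []" using assms(5,6) by auto
  have h0: "A!0 = B!0" using assms(6,7) B by (simp add: hd_conv_nth)
  show ?thesis
  proof (cases "length A = 1")
    case True
    show ?thesis
    proof (rule nth_equalityI)
      show "length A = length B" by (rule len)
      fix i assume "i < length A"
      then have "i = 0" using True by simp
      then show "A!i = B!i" using h0 by simp
    qed
  next
    case False
    then have l2: "Suc 0 < length A" using assms(6) by (cases A) auto
    then have l2b: "Suc 0 < length B" using len by auto
    have A1: "A!1 \<in> set B" using l2 assms(5) nth_mem[of 1 A] by simp
    have B1: "B!1 \<in> set A" using l2b assms(5) nth_mem[of 1 B] by simp
    consider (aa) "\<forall>j<length A. A!j = A!0 + j" | (ad) "\<forall>j<length A. A!j + j = A!0"
      using pw_dir[OF assms(1,3) l2] by blast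
    note ca = this
    consider (ba) "\<forall>j<length B. B!j = B!0 + j" | (bd) "\<forall>j<length B. B!j + j = B!0"
      using pw_dir[OF assms(2,4) l2b] by blast
    note cb = this
    show ?thesis
    proof (rule nth_equalityI)
      show "length A = length B" by (rule len)
      fix i assume i: "i < length A"
      then have ib: "i < length B" using len by simp
      show "A!i = B!i"
      proof (cases rule: ca)
        case aa
        have ai: "A!i = A!0 + i" using aa i by simp
        show ?thesis
        proof (cases rule: cb)
          case ba
          have "B!i = B!0 + i" using ba ib by simp
          then show ?thesis using ai h0 by simp
        next
          case bd
          obtain j where j: "j < length B" "B!j = A!1" using A1 unfolding in_set_conv_nth by blast
          have "B!j + j = B!0" using bd j(1) by simp
          moreover have "A!1 = A!0 + 1" using aa l2 by simp
          ultimately show ?thesis using j(2) h0 by linarith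
        qed
      next
        case ad
        have ai: "A!i + i = A!0" using ad i by simp
        show ?thesis
        proof (cases rule: cb)
          case bd
          have "B!i + i = B!0" using bd ib by simp
          then show ?thesis using ai h0 by linarith
        next
          case ba
          obtain j where j: "j < length A" "A!j = B!1" using B1 unfolding in_set_conv_nth by blast
          have "A!j + j = A!0" using ad j(1) by simp
          moreover have "B!1 = B!0 + 1" using ba l2b by simp
          ultimately show ?thesis using j(2) h0 by linarith
        qed
      qed
    qed
  qed
qed

lemma loop_F:
  "distinct ws \<Longrightarrow> ws \<noteq> [] \<Longrightarrow> U \<inter> set (tl ws) = {} \<Longrightarrow>
   cnot_cost (fst (cascade_loop r False U pl ws)) = 3 * (length ws - 1) \<and>
   map (snd (cascade_loop r False U pl ws)) ws = rotate1 (map pl ws) \<and>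
   (\<forall>v. v \<notin> set ws \<longrightarrow> snd (cascade_loop r False U pl ws) v = pl v)"
proof (induction ws arbitrary: U pl)
  case Nil then show ?case by simp
next
  case (Cons a ws')
  show ?case
  proof (cases ws')
    case Nil then show ?thesis by simp
  next
    case (Cons b rest)
    obtain g pl2 where gl: "cascade_loop r False (insert b U) (swap_pl pl a b) (b#rest) = (g, pl2)"
      by fastforce
    have dis: "distinct (a#b#rest)" using Cons.prems Cons by simp
    have bU: "b \<notin> U" using Cons.prems Cons by auto
    have nh: "\<not> (rest \<noteq> [] \<and> hd rest = a)" using dis by (cases rest) auto
    have eq: "cascade_loop r False U pl (a#b#rest) = (CR b a (int (pl b) - int r) # SWAP a b # g, pl2)"
      using gl bU nh by (auto simp: Let_def)
    have IH: "cnot_cost g = 3 * (length (b#rest) - 1) \<and>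
       map pl2 (b#rest) = rotate1 (map (swap_pl pl a b) (b#rest)) \<and>
       (\<forall>v. v \<notin> set (b#rest) \<longrightarrow> pl2 v = swap_pl pl a b v)"
      using Cons.IH[of "insert b U" "swap_pl pl a b"] Cons.prems Cons gl dis by auto
    have m: "map (swap_pl pl a b) rest = map pl rest" using dis by (auto simp: swap_pl_def)
    show ?thesis using IH eq Cons dis m by (auto simp: swap_pl_def)
  qed
qed


definition cc :: "nat \<Rightarrow> nat" where
  "cc k = (if 3 \<le> k then 3 * (k - 1) else if k = 2 then 2 else 0)"

lemma sum_cc: "2 \<le> n \<Longrightarrow> 2 * (\<Sum>k\<in>{2..n}. cc k) + 3 * n + 2 = 3 * n^2"
proof (induction n rule: dec_induct)
  case base then show ?case by (simp add: cc_def)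
next
  case (step n)
  have "(\<Sum>k\<in>{2..Suc n}. cc k) = (\<Sum>k\<in>{2..n}. cc k) + cc (Suc n)"
    using step by (simp add: sum.cl_ivl_Suc)
  moreover have "cc (Suc n) = 3 * n" using step by (simp add: cc_def)
  ultimately show ?case using step.IH by (simp add: power2_eq_square algebra_simps)
qed

lemma holderI:
  assumes "x \<in> V" "pl x = r" "\<And>v. v \<in> V \<Longrightarrow> pl v = r \<Longrightarrow> v = x"
  shows "holder V pl r = x"
  unfolding holder_def
proof (rule the_equality)
  show "x \<in> V \<and> pl x = r" using assms(1,2) by (rule conjI)
  fix v assume "v \<in> V \<and> pl v = r"
  then show "v = x" using assms(3) by blast
qed

lemma map_upt_range: "map f L = [a..<b] \<Longrightarrow> v \<in> set L \<Longrightarrow> a \<le> f v \<and> f v < b"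
proof -
  assume "map f L = [a..<b]" "v \<in> set L"
  have "f v \<in> set (map f L)" using \<open>v \<in> set L\<close> by simp
  then have "f v \<in> set [a..<b]" using \<open>map f L = [a..<b]\<close> by simp
  then show ?thesis by auto
qed

lemma map_upt_hd: "map f L = [a..<b] \<Longrightarrow> L \<noteq> [] \<Longrightarrow> f (hd L) = a"
proof -
  assume h: "map f L = [a..<b]" "L \<noteq> []"
  then have "a < b" by (cases "a < b") auto
  then have "hd [a..<b] = a" by (simp add: upt_conv_Cons)
  moreover have "hd (map f L) = f (hd L)" using h(2) by (simp add: hd_map)
  ultimately show ?thesis using h(1) by simp
qed

lemma is_walk_pw: "is_walk path_adj R ws \<longleftrightarrow> ws \<noteq> [] \<and> set ws \<subseteq> R \<and> pw ws"
  unfolding is_walk_def pw_def by auto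

lemma pw_butlast: assumes "pw L" shows "pw (butlast L)"
  unfolding pw_def
proof (intro allI impI)
  fix i assume i: "Suc i < length (butlast L)"
  then have "butlast L ! i = L ! i" "butlast L ! Suc i = L ! Suc i" by (simp_all add: nth_butlast)
  moreover have "Suc i < length L" using i by simp
  ultimately show "path_adj (butlast L ! i) (butlast L ! Suc i)" using assms unfolding pw_def by simp
qed

lemma wnext:
  assumes n2: "2 \<le> n" and vc: "valid_choices path_adj {1..n} n P W" and mn: "m < n"
    and qs: "qft_state {1..n} P W m = (g, pl, R)"
    and L: "pw L" "distinct L" "set L = R" "R \<subseteq> {1..n}" "map pl L = [Suc m..<Suc n]"
       "\<forall>v\<in>{1..n}-R. pl v \<le> m" "m = 0 \<longrightarrow> L = P"
  shows "W (Suc m) = L"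
proof (cases m)
  case 0 then show ?thesis using vc L unfolding valid_choices_def by auto
next
  case (Suc k)
  have Lne: "L \<noteq> []" using L(5) mn by auto
  have "shortest_cover_walk_from path_adj R (holder {1..n} pl (Suc m)) (W (Suc m))"
    using vc mn Suc qs unfolding valid_choices_def by (auto dest!: spec[of _ "Suc m"])
  moreover have "holder {1..n} pl (Suc m) = hd L"
  proof (rule holderI)
    show "hd L \<in> {1..n}" using hd_in_set[OF Lne] L(3,4) by blast
    show "pl (hd L) = Suc m" using map_upt_hd[OF L(5) Lne] .
    fix v assume v: "v \<in> {1..n}" "pl v = Suc m"
    have "v \<in> set L" using v L(3,6) by force
    moreover have "inj_on pl (set L)" using L(5) L(2) by (metis distinct_map distinct_upt)
    moreover have "pl (hd L) = Suc m" using map_upt_hd[OF L(5) Lne] .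
    ultimately show "v = hd L" using v hd_in_set[OF Lne] by (metis inj_on_eq_iff)
  qed
  ultimately have sw: "shortest_cover_walk_from path_adj R (hd L) (W (Suc m))" by simp
  have wL: "is_walk path_adj R L" using L Lne by (simp add: is_walk_pw)
  have Wle: "length (W (Suc m)) \<le> length L" using sw wL L(3) unfolding shortest_cover_walk_from_def by auto
  have Wset: "set (W (Suc m)) = R" and Wpw: "pw (W (Suc m))" and Whd: "hd (W (Suc m)) = hd L"
    using sw unfolding shortest_cover_walk_from_def is_walk_pw by auto
  have "card R = length L" using L(2,3) distinct_card by blast
  then have "card (set (W (Suc m))) = length (W (Suc m))" using Wle Wset card_length[of "W (Suc m)"] by auto
  then have Wd: "distinct (W (Suc m))" by (simp add: card_distinct)
  show ?thesis using pw_unique[OF Wpw L(1) Wd L(2)] Wset L(3) Whd Lne by force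
qed


lemma set_butlast_distinct: "distinct xs \<Longrightarrow> xs \<noteq> [] \<Longrightarrow> set (butlast xs) = set xs - {last xs}"
proof -
  assume d: "distinct xs" and ne: "xs \<noteq> []"
  have e: "xs = butlast xs @ [last xs]" using ne by simp
  then have "distinct (butlast xs @ [last xs])" using d by simp
  then have "last xs \<notin> set (butlast xs)" by simp
  moreover have "set xs = insert (last xs) (set (butlast xs))"
  proof -
    have "set xs = set (butlast xs @ [last xs])" using arg_cong[OF e, of set] .
    then show ?thesis by simp
  qed
  ultimately show ?thesis by auto
qed

lemma inv:
  assumes n2: "2 \<le> n" and vc: "valid_choices path_adj {1..n} n P W"
  shows "m < n \<Longrightarrow> qft_state {1..n} P W m = (g, pl, R) \<Longrightarrow>
   \<exists>L. pw L \<and> distinct L \<and> set L = R \<and> R \<subseteq> {1..n} \<and> map pl L = [Suc m..<Suc n] \<and>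
       (\<forall>v\<in>{1..n}-R. pl v \<le> m) \<and> (m = 0 \<longrightarrow> L = P) \<and>
       cnot_cost g = (\<Sum>k\<in>{Suc (n-m)..n}. cc k)"
proof (induction m arbitrary: g pl R)
  case 0
  have qs: "g = []" "pl = init_pl P" "R = {1..n}" using 0 by auto
  have sc: "shortest_cover_walk path_adj {1..n} P" using vc unfolding valid_choices_def by auto
  have pwu: "pw [1..<Suc n]" unfolding pw_def path_adj_def by (simp del: upt_Suc add: nth_upt)
  have wit: "is_walk path_adj {1..n} [1..<Suc n]" using n2 pwu by (auto simp: is_walk_pw)
  have Pset: "set P = {1..n}" and Ppw: "pw P" using sc unfolding shortest_cover_walk_def is_walk_pw by auto
  have Ple: "length P \<le> n" using sc wit unfolding shortest_cover_walk_def by force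
  have cardP: "card (set P) = n" using Pset by simp
  then have Plen: "length P = n" using Ple card_length[of P] by auto
  then have Pd: "distinct P" using cardP by (simp add: card_distinct)
  have mp: "map (init_pl P) P = [1..<Suc n]"
  proof (rule nth_equalityI)
    show "length (map (init_pl P) P) = length [1..<Suc n]" using Plen by simp
    fix i assume i: "i < length (map (init_pl P) P)"
    then have il: "i < length P" by simp
    have "(LEAST j. j < length P \<and> P!j = P!i) = i"
    proof (rule Least_equality)
      show "i < length P \<and> P!i = P!i" using il by simp
      fix y assume y: "y < length P \<and> P!y = P!i"
      then have "y = i" using nth_eq_iff_index_eq[OF Pd, of y i] il by blast
      then show "i \<le> y" by simp
    qed
    then show "map (init_pl P) P ! i = [1..<Suc n] ! i"
      using il Pd Plen by (simp del: upt_Suc add: init_pl_def distinct_remdups_id nth_upt)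
  qed
  show ?case
    by (rule exI[of _ P]) (use qs Ppw Pd Pset mp in auto)
next
  case (Suc m)
  obtain g0 pl0 R0 where qs0: "qft_state {1..n} P W m = (g0, pl0, R0)" by (metis prod_cases3)
  obtain L where L: "pw L" "distinct L" "set L = R0" "R0 \<subseteq> {1..n}" "map pl0 L = [Suc m..<Suc n]"
       "\<forall>v\<in>{1..n}-R0. pl0 v \<le> m" "m = 0 \<longrightarrow> L = P"
       "cnot_cost g0 = (\<Sum>k\<in>{Suc (n-m)..n}. cc k)"
    using Suc.IH[OF _ qs0] Suc.prems by auto
  have WL: "W (Suc m) = L" using wnext[OF n2 vc _ qs0 L(1-7)] Suc.prems by auto
  have lenL: "length L = n - m" using arg_cong[OF L(5), of length] by (simp del: upt_Suc)
  have Lne: "L \<noteq> []" using lenL Suc.prems by auto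
  obtain g1 pl1 where cl: "cascade_loop (Suc m) (length L = 2) {} pl0 L = (g1, pl1)" by fastforce
  have qs: "qft_state {1..n} P W (Suc m) = (g0 @ Had (hd L) # g1, pl1, R0 - {holder {1..n} pl1 (Suc m)})"
    using qs0 cl WL by (simp add: cascade_def)
  then have gg: "g = g0 @ Had (hd L) # g1" "pl = pl1" "R = R0 - {holder {1..n} pl1 (Suc m)}"
    using Suc.prems by auto
  have sumeq: "(\<Sum>k\<in>{Suc (n - Suc m)..n}. cc k) = cc (n - m) + (\<Sum>k\<in>{Suc (n-m)..n}. cc k)"
  proof -
    have "Suc (n - Suc m) = n - m" using Suc.prems by auto
    moreover have "n - m \<le> n" by simp
    ultimately show ?thesis by (simp add: sum.atLeast_Suc_atMost)
  qed
  show ?case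
  proof (cases "length L = 2")
    case False
    then have l3: "3 \<le> length L" using lenL Suc.prems by auto
    have lf: "cnot_cost g1 = 3 * (length L - 1) \<and> map pl1 L = rotate1 (map pl0 L) \<and>
        (\<forall>v. v \<notin> set L \<longrightarrow> pl1 v = pl0 v)"
      using loop_F[OF L(2) Lne, of "{}" "Suc m" pl0] cl False by simp
    have rot: "rotate1 (map pl0 L) = [Suc (Suc m)..<Suc n] @ [Suc m]"
      using L(5) Suc.prems by (simp add: upt_conv_Cons)
    have mL: "map pl1 L = [Suc (Suc m)..<Suc n] @ [Suc m]" using lf rot by simp
    have "map pl1 (butlast L) = butlast (map pl1 L)" by (simp add: map_butlast)
    then have mb: "map pl1 (butlast L) = [Suc (Suc m)..<Suc n]" using mL by simp
    have "pl1 (last L) = last (map pl1 L)" using Lne by (simp add: last_map)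
    then have ml: "pl1 (last L) = Suc m" using mL by simp
    have sb: "set (butlast L) = set L - {last L}" using set_butlast_distinct[OF L(2) Lne] .
    have lastV: "last L \<in> {1..n}" using last_in_set[OF Lne] L(3,4) by blast
    have hold: "holder {1..n} pl1 (Suc m) = last L"
    proof (rule holderI[where pl=pl1 and r="Suc m", OF lastV ml])
      fix v assume v: "v \<in> {1..n}" "pl1 v = Suc m"
      show "v = last L"
      proof (rule ccontr)
        assume nl: "v \<noteq> last L"
        show False
        proof (cases "v \<in> set L")
          case True
          then have "v \<in> set (butlast L)" using sb nl by auto
          then show False using map_upt_range[OF mb] v(2) by force
        next
          case False
          have "pl1 v = pl0 v" using lf False by blast
          moreover have "pl0 v \<le> m" using L(3,6) v(1) False by blast
          ultimately show False using v(2) by simp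
        qed
      qed
    qed
    show ?thesis
    proof (rule exI[of _ "butlast L"], intro conjI)
      show "pw (butlast L)" using pw_butlast[OF L(1)] .
      show "distinct (butlast L)" using L(2) by (simp add: distinct_butlast)
      show "set (butlast L) = R" using sb gg hold L(3) by simp
      show "R \<subseteq> {1..n}" using gg L(4) by auto
      show "map pl (butlast L) = [Suc (Suc m)..<Suc n]" using mb gg by simp
      show "\<forall>v\<in>{1..n} - R. pl v \<le> Suc m"
      proof
        fix v assume v: "v \<in> {1..n} - R"
        show "pl v \<le> Suc m"
        proof (cases "v = last L")
          case True then show ?thesis using ml gg by simp
        next
          case False
          then have "v \<notin> set L" using v gg hold sb L(3) by auto
          then have "pl1 v = pl0 v" using lf by blast
          moreover have "pl0 v \<le> m" using L(3,6) v \<open>v \<notin> set L\<close> by blast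
          ultimately show ?thesis using gg by simp
        qed
      qed
      show "Suc m = 0 \<longrightarrow> butlast L = P" by simp
      show "cnot_cost g = (\<Sum>k\<in>{Suc (n - Suc m)..n}. cc k)"
        using gg lf L(8) sumeq l3 lenL by (simp add: cost_app_Had cc_def)
    qed
  next
    case True
    then obtain a b where ab: "L = [a, b]" by (auto simp: length_Suc_conv numeral_2_eq_2)
    have nm: "n = Suc (Suc m)" using True lenL Suc.prems by auto
    have pa: "pl0 a = Suc m" and pb: "pl0 b = Suc (Suc m)" using L(5) ab nm by (simp_all add: upt_conv_Cons)
    have c2: "cascade_loop (Suc m) True {} pl0 [a, b] = ([CR b a (int (pl0 b) - int (Suc m))], pl0)"
      by (simp add: Let_def)
    then have g1: "g1 = [CR b a (int (pl0 b) - int (Suc m))]" "pl1 = pl0" using cl ab by auto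
    have aV: "a \<in> {1..n}" using ab L(3,4) by auto
    have hold: "holder {1..n} pl1 (Suc m) = a"
    proof (rule holderI[OF aV])
      show "pl1 a = Suc m" using g1 pa by simp
      fix v assume v: "v \<in> {1..n}" "pl1 v = Suc m"
      show "v = a"
      proof (rule ccontr)
        assume "v \<noteq> a"
        show False
        proof (cases "v = b")
          case True then show False using v g1 pb by simp
        next
          case False
          then have "v \<notin> R0" using \<open>v \<noteq> a\<close> L(3) ab by auto
          then have "pl0 v \<le> m" using L(6) v(1) by blast
          then show False using v(2) g1 by simp
        qed
      qed
    qed
    have ab2: "a \<noteq> b" using L(2) ab by simp
    show ?thesis
    proof (rule exI[of _ "[b]"], intro conjI)
      show "pw [b]" unfolding pw_def by simp
      show "distinct [b]" by simp
      show "set [b] = R" using gg hold L(3) ab ab2 by auto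
      show "R \<subseteq> {1..n}" using gg L(4) by auto
      show "map pl [b] = [Suc (Suc m)..<Suc n]" using gg g1 pb nm by simp
      show "\<forall>v\<in>{1..n} - R. pl v \<le> Suc m"
      proof
        fix v assume v: "v \<in> {1..n} - R"
        show "pl v \<le> Suc m"
        proof (cases "v = a")
          case True then show ?thesis using pa gg g1 by simp
        next
          case False
          then have "v \<notin> set L" using v gg hold L(3) ab by auto
          then have "pl0 v \<le> m" using L(3,6) v by blast
          then show ?thesis using gg g1 by simp
        qed
      qed
      show "Suc m = 0 \<longrightarrow> [b] = P" by simp
      show "cnot_cost g = (\<Sum>k\<in>{Suc (n - Suc m)..n}. cc k)"
        using gg g1 L(8) sumeq nm by (simp add: cost_app_Had cc_def)
    qed
  qed
qed

theorem lemma6: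
  fixes n :: nat and P :: "nat list" and W :: "nat \<Rightarrow> nat list"
  assumes "n \<ge> 2"
    and "valid_choices path_adj {1..n} n P W"
  shows "real (cnot_cost (qft_circuit {1..n} n P W)) = 1.5 * real n ^ 2 - 1.5 * real n - 1"
proof -
  obtain g pl R where qs0: "qft_state {1..n} P W (n - 1) = (g, pl, R)" by (metis prod_cases3)
  have nm: "n - 1 < n" using assms(1) by simp
  obtain L where L: "pw L" "distinct L" "set L = R" "R \<subseteq> {1..n}" "map pl L = [Suc (n-1)..<Suc n]"
       "\<forall>v\<in>{1..n}-R. pl v \<le> n - 1" "n - 1 = 0 \<longrightarrow> L = P"
       "cnot_cost g = (\<Sum>k\<in>{Suc (n-(n-1))..n}. cc k)"
    using inv[OF assms(1,2) nm qs0] by (elim exE conjE) (rule that)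
  have WL: "W (Suc (n-1)) = L" using wnext[OF assms(1,2) nm qs0 L(1-7)] .
  have "length L = 1" using arg_cong[OF L(5), of length] assms(1) by (simp del: upt_Suc)
  then obtain x where x: "L = [x]" by (cases L) auto
  have sn: "Suc (n - 1) = n" using assms(1) by simp
  have c: "cascade n [x] pl = ([Had x], pl)" by (simp add: cascade_def)
  obtain k where nk: "n = Suc k" using assms(1) by (cases n) auto
  have qs: "fst (qft_state {1..n} P W n) = g @ [Had x]" using qs0 WL x c nk by simp
  have cost: "cnot_cost (qft_circuit {1..n} n P W) = (\<Sum>k\<in>{2..n}. cc k)"
    using qs L(8) cost_app_Had[of g x "[]"] assms(1) by (simp add: qft_circuit_def numeral_2_eq_2)
  have "2 * (\<Sum>k\<in>{2..n}. cc k) + 3 * n + 2 = 3 * n^2" using sum_cc[OF assms(1)] .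
  then have "2 * real (\<Sum>k\<in>{2..n}. cc k) + 3 * real n + 2 = 3 * real n ^ 2"
    by (metis (mono_tags, lifting) of_nat_add of_nat_mult of_nat_numeral of_nat_power)
  then show ?thesis using cost by simp
qed

end
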